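(* Let $d>0$ be square-free, $\Gamma<\Gamma_d$ a subgroup of finite index, and $A=\begin{pmatrix}a&B\\ \bar B&c\end{pmatrix}$ with $a,c\in\mathbb{Z}$, $B\in\mathcal{O}_d$, $D=|B|^2-ac>0$, the Hermitian matrix associated to an immersed totally geodesic surface $\mathcal{S}\subset\mathbb{H}^3/\Gamma$. Then $\mathcal{S}$ is embedded in $\mathbb{H}^3/\Gamma$ if and only if $|\mathrm{Tr}(\gamma^*A\gamma A^{-1})|\ge 2$ for every $\gamma\in\Gamma$.
   Context: $\mathcal{O}_d$ is the ring of integers of $\mathbb{Q}(\sqrt{-d})$, $\Gamma_d=\mathrm{PSL}(2,\mathcal{O}_d)$; $\gamma^*$ is the conjugate transpose (the expression is independent of the sign of the matrix representative). The surface associated to $A$ is the image in $\mathbb{H}^3/\Gamma$ of the hyperbolic plane $H_{\mathcal{C}}$ bounded by the circle/line $\mathcal{C}=\{z: a|z|^2+Bz+\bar B\bar z+c=0\}$; note $\gamma^*A\gamma$ corresponds to $\gamma^{-1}\mathcal{C}$. It is embedded if for all $\gamma\in\Gamma$, $\gamma H_{\mathcal{C}}=H_{\mathcal{C}}$ or $\gamma H_{\mathcal{C}}\cap H_{\mathcal{C}}=\emptyset$. *)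

theory Defs
  imports "HOL-Analysis.Analysis" "HOL-Computational_Algebra.Squarefree"
begin

text \<open>Ring of integers O_d of Q(sqrt(-d)), as a set of complex numbers (d squarefree, d > 0).\<close>
definition omega_d :: "nat \<Rightarrow> complex" where
  "omega_d d = (if d mod 4 = 3 then (1 + \<i> * complex_of_real (sqrt (real d))) / 2
               else \<i> * complex_of_real (sqrt (real d)))"

definition Od :: "nat \<Rightarrow> complex set" where
  "Od d = {of_int x + of_int y * omega_d d | x y. True}"

definition SL2_Od :: "nat \<Rightarrow> (complex^2^2) set" where
  "SL2_Od d = {M. (\<forall>i j. M$i$j \<in> Od d) \<and> det M = 1}"

text \<open>A subgroup of finite index in PSL(2,O_d) is represented by its preimage in SL(2,O_d):
  a subgroup of SL(2,O_d) containing -I, of finite index.\<close>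
definition finite_index_subgroup :: "nat \<Rightarrow> (complex^2^2) set \<Rightarrow> bool" where
  "finite_index_subgroup d G \<longleftrightarrow>
     G \<subseteq> SL2_Od d \<and> mat 1 \<in> G \<and> - mat 1 \<in> G \<and>
     (\<forall>g\<in>G. \<forall>h\<in>G. g ** h \<in> G) \<and> (\<forall>g\<in>G. matrix_inv g \<in> G) \<and>
     finite ((\<lambda>g. (\<lambda>h. g ** h) ` G) ` SL2_Od d)"

definition ctranspose :: "complex^2^2 \<Rightarrow> complex^2^2" where
  "ctranspose M = (\<chi> i j. cnj (M$j$i))"

definition H3 :: "(complex \<times> real) set" where
  "H3 = {(z, t). t > 0}"

text \<open>Standard action of SL(2,C) on the upper half-space (Poincare extension of the Moebius map
  z \<mapsto> (alpha z + beta)/(gamma z + delta)).\<close>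
definition act_H3 :: "complex^2^2 \<Rightarrow> complex \<times> real \<Rightarrow> complex \<times> real" where
  "act_H3 M p = (case p of (z, t) \<Rightarrow>
     (let al = M$1$1; be = M$1$2; ga = M$2$1; de = M$2$2;
          N = (cmod (ga * z + de))^2 + (cmod ga)^2 * t^2
      in (((al * z + be) * cnj (ga * z + de) + al * cnj ga * complex_of_real (t^2)) / complex_of_real N,
          t / N)))"

text \<open>The hyperbolic plane H_C in H^3 bounded by the circle/line
  C = {z. (z,1)^* A (z,1) = 0}, i.e. the points (z,t), t>0, with
  A11 (|z|^2 + t^2) + cnj z A12 + A21 z + A22 = 0.\<close>
definition hplane :: "complex^2^2 \<Rightarrow> (complex \<times> real) set" where
  "hplane A = {(z, t). t > 0 \<and>
      A$1$1 * complex_of_real ((cmod z)^2 + t^2) + cnj z * A$1$2 + A$2$1 * z + A$2$2 = 0}"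

definition embedded_surface :: "(complex^2^2) set \<Rightarrow> complex^2^2 \<Rightarrow> bool" where
  "embedded_surface G A \<longleftrightarrow>
     (\<forall>g\<in>G. act_H3 g ` hplane A = hplane A \<or> act_H3 g ` hplane A \<inter> hplane A = {})"

end

theory Submission
  imports Defs
begin


definition lip :: "real \<times> real \<times> real \<times> real \<Rightarrow> real \<times> real \<times> real \<times> real \<Rightarrow> real" where
  "lip x y = (case x of (x0,x1,x2,x3) \<Rightarrow> case y of (y0,y1,y2,y3) \<Rightarrow>
      x0*y0 - x1*y1 - x2*y2 - x3*y3)"

lemma lip_simp[simp]: "lip (x0,x1,x2,x3) (y0,y1,y2,y3) = x0*y0 - x1*y1 - x2*y2 - x3*y3"
  by (simp add: lip_def)

lemma rcs:
  fixes p0 p1 p2 p3 z0 z1 z2 z3 :: real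
  assumes "lip (p0,p1,p2,p3) (p0,p1,p2,p3) > 0" "lip (z0,z1,z2,z3) (p0,p1,p2,p3) = 0"
    "lip (z0,z1,z2,z3) (z0,z1,z2,z3) \<ge> 0"
  shows "z0 = 0 \<and> z1 = 0 \<and> z2 = 0 \<and> z3 = 0"
proof -
  define Sp where "Sp = p1^2+p2^2+p3^2"
  define Sz where "Sz = z1^2+z2^2+z3^2"
  have e0: "z0*p0 - z1*p1 - z2*p2 - z3*p3 = 0" using assms(2) by simp
  have e: "p0*z0 = p1*z1+p2*z2+p3*z3" using e0 by (simp add: algebra_simps)
  have cs: "(p1*z1+p2*z2+p3*z3)^2 \<le> Sp * Sz"
  proof -
    have "Sp*Sz - (p1*z1+p2*z2+p3*z3)^2 = (p1*z2-p2*z1)^2 + (p1*z3-p3*z1)^2 + (p2*z3-p3*z2)^2"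
      unfolding Sp_def Sz_def by algebra
    moreover have "(p1*z2-p2*z1)^2 + (p1*z3-p3*z1)^2 + (p2*z3-p3*z2)^2 \<ge> 0" by simp
    ultimately show ?thesis by linarith
  qed
  have hp: "p0^2 > Sp" using assms(1) unfolding Sp_def by (simp add: power2_eq_square)
  have hz: "z0^2 \<ge> Sz" using assms(3) unfolding Sz_def by (simp add: power2_eq_square)
  have "p0^2 * z0^2 \<le> Sp * Sz" using cs e by (simp add: power_mult_distrib[symmetric])
  moreover have "Sp \<ge> 0" "Sz \<ge> 0" unfolding Sp_def Sz_def by simp_all
  ultimately have "Sz = 0"
    using hp hz by (smt (verit) mult_le_cancel_right mult_left_mono mult_strict_right_mono)
  then have "z1 = 0" "z2 = 0" "z3 = 0" unfolding Sz_def by (simp_all add: add_nonneg_eq_0_iff)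
  moreover have "p0 \<noteq> 0" using hp \<open>Sp \<ge> 0\<close> by auto
  ultimately show ?thesis using e by simp
qed

type_synonym v4 = "real \<times> real \<times> real \<times> real"

definition vlin :: "real \<Rightarrow> v4 \<Rightarrow> real \<Rightarrow> v4 \<Rightarrow> v4" where
  "vlin a u b w = (case u of (u0,u1,u2,u3) \<Rightarrow> case w of (w0,w1,w2,w3) \<Rightarrow>
     (a*u0+b*w0, a*u1+b*w1, a*u2+b*w2, a*u3+b*w3))"

lemma lip_vlin_r: "lip x (vlin a u b v) = a * lip x u + b * lip x v"
  by (cases x; cases u; cases v) (simp add: vlin_def algebra_simps)

lemma lip_vlin_l: "lip (vlin a u b v) x = a * lip u x + b * lip v x"
  by (cases x; cases u; cases v) (simp add: vlin_def algebra_simps)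

lemma lip_sym: "lip x y = lip y x"
  by (cases x; cases y) (simp add: algebra_simps)

lemma lip_neg_r: "lip x (vlin (-1) y 0 y) = - lip x y"
  by (simp add: lip_vlin_r)

lemma fst_pos_fix:
  assumes "lip p p > 0"
  shows "\<exists>\<sigma>. (\<sigma> = 1 \<or> \<sigma> = -1) \<and> fst (vlin \<sigma> p 0 p) > 0"
proof -
  obtain p0 p1 p2 p3 where p: "p = (p0,p1,p2,p3)" by (cases p) auto
  have "p0*p0 > p1*p1 + p2*p2 + p3*p3" using assms p by simp
  moreover have "p1*p1 + p2*p2 + p3*p3 \<ge> 0" by simp
  ultimately have "p0 \<noteq> 0" by (metis less_le_not_le mult_zero_left)
  then show ?thesis
  proof (cases "p0 > 0")
    case True then show ?thesis by (intro exI[of _ 1]) (simp add: p vlin_def)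
  next
    case False then show ?thesis using \<open>p0 \<noteq> 0\<close> by (intro exI[of _ "-1"]) (simp add: p vlin_def)
  qed
qed

lemma fix_sign:
  assumes "lip p p > 0"
  shows "\<exists>q. lip q q > 0 \<and> fst q > 0 \<and> (\<forall>x. lip x q = 0 \<longleftrightarrow> lip x p = 0)"
proof -
  obtain \<sigma> where s: "\<sigma> = 1 \<or> \<sigma> = -1" "fst (vlin \<sigma> p 0 p) > 0" using fst_pos_fix[OF assms] by blast
  show ?thesis
    apply (rule exI[of _ "vlin \<sigma> p 0 p"])
    using s assms by (auto simp: lip_vlin_r lip_vlin_l)
qed

lemma g1:
  assumes "lip x x = -K" "lip y y = -K" "K > 0" "(lip x y)^2 < K^2"
  shows "\<exists>p. lip p p > 0 \<and> fst p > 0 \<and> lip x p = 0 \<and> lip y p = 0"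
proof -
  define \<beta> where "\<beta> = lip x y"
  define T :: v4 where "T = (1,0,0,0)"
  define sx where "sx = lip x T"
  define ry where "ry = lip y T"
  define \<Delta> where "\<Delta> = K^2 - \<beta>^2"
  define c1 where "c1 = K * sx + \<beta> * ry"
  define c2 where "c2 = \<beta> * sx + K * ry"
  define P where "P = vlin \<Delta> T 1 (vlin c1 x c2 y)"
  have d: "\<Delta> > 0" using assms(4) unfolding \<Delta>_def \<beta>_def by simp
  have px: "lip x P = 0"
    unfolding P_def lip_vlin_r using assms unfolding c1_def c2_def \<Delta>_def sx_def \<beta>_def
    by (simp add: algebra_simps power2_eq_square)
  have py: "lip y P = 0"
    unfolding P_def lip_vlin_r using assms unfolding c1_def c2_def \<Delta>_def ry_def \<beta>_def
    by (simp add: lip_sym[of y x] algebra_simps power2_eq_square)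
  have "lip P P = \<Delta> * lip P T"
    by (subst (2) P_def) (simp add: lip_vlin_r lip_sym[of P] px py)
  also have "lip P T = \<Delta> + c1 * sx + c2 * ry"
    unfolding P_def lip_vlin_l by (simp add: T_def sx_def ry_def lip_sym)
  finally have pp: "lip P P = \<Delta> * (\<Delta> + c1 * sx + c2 * ry)" .
  have "\<bar>\<beta>\<bar> < K" using assms(4) \<open>K>0\<close> unfolding \<beta>_def
    using power2_less_imp_less[of "\<bar>lip x y\<bar>" K] by simp
  have "c1 * sx + c2 * ry = K*(sx^2+ry^2) + 2 * \<beta> * sx * ry" unfolding c1_def c2_def by (simp add: algebra_simps power2_eq_square)
  moreover have "K*(sx^2+ry^2) + 2 * \<beta> * sx * ry \<ge> 0"
  proof -
    have "0 \<le> (\<bar>sx\<bar> - \<bar>ry\<bar>)^2" by simp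
    then have h1: "2 * \<bar>sx * ry\<bar> \<le> sx^2+ry^2"
      by (simp add: power2_eq_square algebra_simps abs_mult)
    have h2: "\<bar>\<beta>\<bar> * (2 * \<bar>sx * ry\<bar>) \<le> K * (sx^2+ry^2)"
      by (rule mult_mono) (use h1 \<open>\<bar>\<beta>\<bar> < K\<close> in auto)
    have h3: "-(2 * \<beta> * sx * ry) \<le> \<bar>\<beta>\<bar> * (2 * \<bar>sx * ry\<bar>)"
    proof -
      have "-(2 * \<beta> * sx * ry) \<le> \<bar>2 * \<beta> * sx * ry\<bar>" by linarith
      also have "\<dots> = \<bar>\<beta>\<bar> * (2 * \<bar>sx * ry\<bar>)" by (simp add: abs_mult)
      finally show ?thesis .
    qed
    show ?thesis using h2 h3 by linarith
  qed
  ultimately have "lip P P > 0" using pp d by simp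
  then obtain q where "lip q q > 0 \<and> fst q > 0 \<and> (\<forall>x. lip x q = 0 \<longleftrightarrow> lip x P = 0)"
    using fix_sign by blast
  then show ?thesis using px py by blast
qed

lemma g1b:
  assumes "lip x x = -K" "lip y y = -K" "K > 0" "(lip x y)^2 < K^2"
  shows "\<exists>p. lip p p > 0 \<and> fst p > 0 \<and> lip x p = 0 \<and> lip y p \<noteq> 0"
proof -
  define \<beta> where "\<beta> = lip x y"
  define W where "W = vlin K y \<beta> x"
  have "lip W W = K * (\<beta>^2 - K^2)"
    unfolding W_def lip_vlin_r lip_vlin_l using assms
    by (simp add: lip_sym[of y x] \<beta>_def algebra_simps power2_eq_square)
  also have "\<dots> < 0" using assms(3,4) unfolding \<beta>_def by (simp add: mult_pos_neg)
  finally have wn: "lip W W < 0" .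
  have "\<exists>T. lip T T > 0 \<and> lip T W \<noteq> 0"
  proof (rule ccontr)
    assume "\<not> ?thesis"
    then have z: "\<And>T. lip T T > 0 \<Longrightarrow> lip T W = 0" by blast
    obtain w0 w1 w2 w3 where w: "W = (w0,w1,w2,w3)" by (cases W) auto
    have "w0 = 0" using z[of "(1,0,0,0)"] w by simp
    moreover have "2*w0 - w1 = 0" using z[of "(2,1,0,0)"] w by simp
    moreover have "2*w0 - w2 = 0" using z[of "(2,0,1,0)"] w by simp
    moreover have "2*w0 - w3 = 0" using z[of "(2,0,0,1)"] w by simp
    ultimately have "W = (0,0,0,0)" using w by simp
    then show False using wn by simp
  qed
  then obtain T where T: "lip T T > 0" "lip T W \<noteq> 0" by blast
  define P where "P = vlin K T (lip T x) x"
  have px: "lip x P = 0" unfolding P_def lip_vlin_r using assms by (simp add: lip_sym[of x T])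
  have "lip P P = K * lip P T + lip T x * lip P x" unfolding P_def by (rule lip_vlin_r)
  also have "lip P x = 0" using px lip_sym by metis
  also have "lip P T = K * lip T T + lip T x * lip T x" unfolding P_def lip_vlin_l by (simp add: lip_sym[of x T])
  finally have "lip P P = K * (K * lip T T + lip T x * lip T x)" by simp
  moreover have "K * lip T T + lip T x * lip T x > 0" using T(1) assms(3)
    by (simp add: add_pos_nonneg)
  ultimately have pp: "lip P P > 0" using assms(3) by simp
  have "lip y P = lip T W" unfolding P_def W_def lip_vlin_r
    by (simp add: lip_sym[of y T] lip_sym[of y x] \<beta>_def algebra_simps)
  then have py: "lip y P \<noteq> 0" using T(2) by simp
  obtain q where "lip q q > 0 \<and> fst q > 0 \<and> (\<forall>x. lip x q = 0 \<longleftrightarrow> lip x P = 0)"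
    using fix_sign[OF pp] by blast
  then show ?thesis using px py by blast
qed

lemma g2:
  assumes "lip x x = -K" "lip y y = -K" "K > 0" "(lip x y)^2 \<ge> K^2"
    and "lip p p > 0" "lip x p = 0" "lip y p = 0"
  shows "y = x \<or> y = vlin (-1) x 0 x"
proof -
  define \<beta> where "\<beta> = lip x y"
  define Z where "Z = vlin K y \<beta> x"
  have "lip Z Z = K * (\<beta>^2 - K^2)"
    unfolding Z_def lip_vlin_r lip_vlin_l using assms
    by (simp add: lip_sym[of y x] \<beta>_def algebra_simps power2_eq_square)
  also have "\<dots> \<ge> 0" using assms(3,4) unfolding \<beta>_def by simp
  finally have zz: "lip Z Z \<ge> 0" .
  have zp: "lip Z p = 0" unfolding Z_def lip_vlin_l using assms by simp
  obtain z0 z1 z2 z3 where zd: "Z = (z0,z1,z2,z3)" by (cases Z) auto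
  obtain p0 p1 p2 p3 where pd: "p = (p0,p1,p2,p3)" by (cases p) auto
  have "z0 = 0 \<and> z1 = 0 \<and> z2 = 0 \<and> z3 = 0"
    by (rule rcs) (use assms(5) zp zz zd pd in auto)
  then have Z0: "Z = (0,0,0,0)" using zd by simp
  have yx: "y = vlin (- \<beta> / K) x 0 x"
  proof -
    obtain x0 x1 x2 x3 where xd: "x = (x0,x1,x2,x3)" by (cases x) auto
    obtain y0 y1 y2 y3 where yd: "y = (y0,y1,y2,y3)" by (cases y) auto
    have "K*y0 + \<beta>*x0 = 0" "K*y1 + \<beta>*x1 = 0" "K*y2 + \<beta>*x2 = 0" "K*y3 + \<beta>*x3 = 0"
      using Z0 unfolding Z_def xd yd vlin_def by simp_all
    then show ?thesis using assms(3) unfolding xd yd vlin_def by (simp add: field_simps)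
  qed
  have "lip y y = (\<beta>/K)^2 * lip x x"
    by (subst yx, subst yx) (simp add: lip_vlin_r lip_vlin_l power2_eq_square)
  then have "-K = (\<beta>/K)^2 * (-K)" using assms by simp
  then have "(\<beta>/K)^2 = 1" using assms(3) by simp
  then have "\<beta>/K = 1 \<or> \<beta>/K = -1" by (simp add: power2_eq_1_iff)
  then show ?thesis
  proof
    assume "\<beta>/K = 1"
    then have "- \<beta>/K = -1" by simp
    then show ?thesis using yx by simp
  next
    assume "\<beta>/K = -1"
    then have "- \<beta>/K = 1" by simp
    then have "y = vlin 1 x 0 x" using yx by simp
    then show ?thesis by (cases x) (simp add: vlin_def)
  qed
qed



lemma cmod_sq_c: "complex_of_real ((cmod z)^2) = z * cnj z"
  by (rule complex_norm_square)
lemma cmod_sq_c2: "(complex_of_real (cmod z))^2 = z * cnj z"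
  using complex_norm_square by simp


definition mk2 :: "complex \<Rightarrow> complex \<Rightarrow> complex \<Rightarrow> complex \<Rightarrow> complex^2^2" where
  "mk2 a b c d = vector [vector [a, b], vector [c, d]]"

lemma mk2_nth[simp]: "mk2 a b c d $ 1 $ 1 = a" "mk2 a b c d $ 1 $ 2 = b"
  "mk2 a b c d $ 2 $ 1 = c" "mk2 a b c d $ 2 $ 2 = d"
  by (simp_all add: mk2_def)

lemma mk2_eta: "M = mk2 (M$1$1) (M$1$2) (M$2$1) (M$2$2)"
  by (simp add: vec_eq_iff forall_2)

lemma mk2_eq_iff: "mk2 a b c d = mk2 a' b' c' d' \<longleftrightarrow> a = a' \<and> b = b' \<and> c = c' \<and> d = d'"
  by (simp add: vec_eq_iff forall_2)

lemma mk2_mult: "mk2 a b c d ** mk2 e f g h = mk2 (a*e+b*g) (a*f+b*h) (c*e+d*g) (c*f+d*h)"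
  by (simp add: vec_eq_iff forall_2 matrix_matrix_mult_def sum_2)

lemma mk2_one: "mat 1 = mk2 1 0 0 1"
  by (simp add: vec_eq_iff forall_2 mat_def)

lemma mk2_ct: "ctranspose (mk2 a b c d) = mk2 (cnj a) (cnj c) (cnj b) (cnj d)"
  by (simp add: vec_eq_iff forall_2 ctranspose_def)

lemma mk2_det: "det (mk2 a b c d) = a*d - b*c"
  by (simp add: det_2)

lemma mk2_trace: "trace (mk2 a b c d) = a + d"
  by (simp add: trace_def sum_2)

lemma matrix_inv_eq:
  fixes A M :: "complex^2^2"
  assumes "A ** M = mat 1" "M ** A = mat 1"
  shows "matrix_inv A = M"
proof -
  have ex: "\<exists>A'. A ** A' = mat 1 \<and> A' ** A = mat 1" using assms by blast
  have s: "A ** matrix_inv A = mat 1 \<and> matrix_inv A ** A = mat 1"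
    unfolding matrix_inv_def by (rule someI_ex[OF ex])
  have "matrix_inv A = matrix_inv A ** (A ** M)" using assms by simp
  also have "\<dots> = (matrix_inv A ** A) ** M" by (simp add: matrix_mul_assoc)
  also have "\<dots> = M" using s by simp
  finally show ?thesis .
qed

lemma mk2_inv:
  assumes "a*d - b*c \<noteq> 0"
  shows "matrix_inv (mk2 a b c d) = mk2 (d/(a*d-b*c)) (-b/(a*d-b*c)) (-c/(a*d-b*c)) (a/(a*d-b*c))"
proof -
  define D where "D = a*d - b*c"
  have D: "D \<noteq> 0" using assms D_def by simp
  have "matrix_inv (mk2 a b c d) = mk2 (d/D) (-b/D) (-c/D) (a/D)"
  proof (rule matrix_inv_eq)
    show "mk2 a b c d ** mk2 (d / D) (- b / D) (- c / D) (a / D) = mat 1"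
      unfolding mk2_mult mk2_one mk2_eq_iff using D unfolding D_def
      by (simp add: divide_simps; simp add: algebra_simps)
    show "mk2 (d / D) (- b / D) (- c / D) (a / D) ** mk2 a b c d = mat 1"
      unfolding mk2_mult mk2_one mk2_eq_iff using D unfolding D_def
      by (simp add: divide_simps; simp add: algebra_simps)
  qed
  then show ?thesis unfolding D_def .
qed

definition hm :: "real \<Rightarrow> real \<Rightarrow> complex \<Rightarrow> complex^2^2" where
  "hm m1 m4 \<mu> = mk2 (of_real m1) \<mu> (cnj \<mu>) (of_real m4)"

definition hv :: "real \<Rightarrow> real \<Rightarrow> complex \<Rightarrow> real \<times> real \<times> real \<times> real" where
  "hv m1 m4 \<mu> = (m1+m4, m4-m1, -2*Re \<mu>, -2*Im \<mu>)"

definition pv :: "complex \<Rightarrow> real \<Rightarrow> real \<times> real \<times> real \<times> real" where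
  "pv z t = ((((cmod z)^2+t^2)/t + 1/t)/2, (((cmod z)^2+t^2)/t - 1/t)/2, Re z/t, Im z/t)"

lemma ct_mult: "ctranspose (X ** Y) = ctranspose Y ** ctranspose X"
  by (subst (1 2 3 4) mk2_eta) (simp add: mk2_mult mk2_ct mk2_eq_iff algebra_simps)

lemma ct_ct: "ctranspose (ctranspose X) = X"
  by (simp add: ctranspose_def vec_eq_iff)

lemma ct_hm: "ctranspose (hm m1 m4 \<mu>) = hm m1 m4 \<mu>"
  by (simp add: hm_def mk2_ct)

lemma det_ct: "det (ctranspose X) = cnj (det X)"
  by (subst (1 2) mk2_eta) (simp add: mk2_ct mk2_det)

lemma herm_hm:
  assumes "ctranspose M = M"
  shows "M = hm (Re (M$1$1)) (Re (M$2$2)) (M$1$2)"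
proof -
  have "ctranspose M $ 1 $ 1 = M $ 1 $ 1" "ctranspose M $ 2 $ 2 = M $ 2 $ 2" "ctranspose M $ 2 $ 1 = M $ 2 $ 1"
    using assms by simp_all
  then have "cnj (M$1$1) = M$1$1" "cnj (M$2$2) = M$2$2" "cnj (M$1$2) = M$2$1"
    by (simp_all add: ctranspose_def)
  then have "Im (M$1$1) = 0" "Im (M$2$2) = 0" "M$2$1 = cnj (M$1$2)"
    by (simp_all add: complex_eq_iff)
  then show ?thesis
    by (subst mk2_eta) (simp add: hm_def mk2_eq_iff complex_eq_iff)
qed

lemma det_hm: "det (hm m1 m4 \<mu>) = of_real (m1*m4 - (cmod \<mu>)^2)"
  by (simp add: hm_def mk2_det cmod_sq_c2)

lemma lip_hv: "lip (hv m1 m4 \<mu>) (hv m1 m4 \<mu>) = 4*(m1*m4 - (cmod \<mu>)^2)"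
  using cmod_power2[of \<mu>] by (simp add: hv_def algebra_simps power2_eq_square)

lemma trace_hm:
  assumes "m1*m4 - (cmod \<mu>)^2 \<noteq> 0"
  shows "trace (hm m1' m4' \<mu>' ** matrix_inv (hm m1 m4 \<mu>)) =
     of_real (2 * lip (hv m1 m4 \<mu>) (hv m1' m4' \<mu>') / lip (hv m1 m4 \<mu>) (hv m1 m4 \<mu>))"
proof -
  define D where "D = m1*m4 - (cmod \<mu>)^2"
  have Dc: "of_real m1 * of_real m4 - \<mu> * cnj \<mu> = complex_of_real D"
    unfolding D_def by (simp add: cmod_sq_c2)
  have "D \<noteq> 0" using assms unfolding D_def .
  then have D0: "complex_of_real D \<noteq> 0" by simp
  have "trace (hm m1' m4' \<mu>' ** matrix_inv (hm m1 m4 \<mu>)) =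
     (of_real m1' * of_real m4 - \<mu>' * cnj \<mu> - cnj \<mu>' * \<mu> + of_real m4' * of_real m1) / of_real D"
    unfolding hm_def mk2_inv[OF D0[folded Dc]] Dc
    by (simp add: mk2_mult mk2_trace add_divide_distrib diff_divide_distrib algebra_simps)
  also have "of_real m1' * of_real m4 - \<mu>' * cnj \<mu> - cnj \<mu>' * \<mu> + of_real m4' * of_real m1 =
     complex_of_real (m1'*m4 + m4'*m1 - 2*(Re \<mu> * Re \<mu>' + Im \<mu> * Im \<mu>'))"
    by (simp add: complex_eq_iff algebra_simps)
  finally have tr: "trace (hm m1' m4' \<mu>' ** matrix_inv (hm m1 m4 \<mu>)) =
     complex_of_real ((m1'*m4 + m4'*m1 - 2*(Re \<mu> * Re \<mu>' + Im \<mu> * Im \<mu>')) / D)"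
    by (simp add: of_real_divide)
  have l1: "lip (hv m1 m4 \<mu>) (hv m1' m4' \<mu>') = 2*(m1'*m4 + m4'*m1 - 2*(Re \<mu> * Re \<mu>' + Im \<mu> * Im \<mu>'))"
    by (simp add: hv_def algebra_simps)
  have l2: "lip (hv m1 m4 \<mu>) (hv m1 m4 \<mu>) = 4 * D" unfolding D_def lip_hv ..
  have e: "2 * (2 * X) / (4 * D) = X / D" for X :: real by simp
  show ?thesis unfolding tr l1 l2 e ..
qed

lemma hplane_hm:
  "(z,t) \<in> hplane (hm m1 m4 \<mu>) \<longleftrightarrow> t > 0 \<and> lip (hv m1 m4 \<mu>) (pv z t) = 0"
proof -
  define Q where "Q = m1*((cmod z)^2+t^2) + 2*(Re z*Re \<mu> + Im z*Im \<mu>) + m4"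
  have c: "of_real m1 * complex_of_real ((cmod z)^2+t^2) + cnj z * \<mu> + cnj \<mu> * z + of_real m4 = of_real Q"
    unfolding Q_def by (simp add: complex_eq_iff algebra_simps)
  have "t > 0 \<Longrightarrow> lip (hv m1 m4 \<mu>) (pv z t) = Q / t"
    unfolding Q_def by (simp add: hv_def pv_def field_simps; simp add: algebra_simps)
  then show ?thesis using c by (auto simp: hplane_def hm_def)
qed



definition Pm :: "complex \<times> real \<Rightarrow> complex^2^2" where
  "Pm p = (case p of (z,t) \<Rightarrow> mk2 ((z*cnj z + of_real t * of_real t)/of_real t) (z/of_real t)
      (cnj z/of_real t) (1/of_real t))"

lemma Pm_inj:
  assumes "t > 0" "t' > 0" "Pm (z,t) = Pm (z',t')"
  shows "z = z' \<and> t = t'"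
  using assms by (auto simp: Pm_def mk2_eq_iff)

lemma act_Pm:
  assumes "det g = 1" "t > 0"
  shows "snd (act_H3 g (z,t)) > 0 \<and> Pm (act_H3 g (z,t)) = g ** Pm (z,t) ** ctranspose g"
proof -
  define al where "al = g$1$1"
  define be where "be = g$1$2"
  define ga where "ga = g$2$1"
  define de where "de = g$2$2"
  have g: "g = mk2 al be ga de" unfolding al_def be_def ga_def de_def by (rule mk2_eta)
  have dt: "al*de - be*ga = 1" using assms(1) unfolding g mk2_det .
  have dtc: "cnj al * cnj de - cnj be * cnj ga = 1" using arg_cong[OF dt, of cnj] by simp
  define tc where "tc = complex_of_real t"
  define N where "N = (cmod (ga * z + de))^2 + (cmod ga)^2 * t^2"
  define w where "w = (al * z + be) * cnj (ga * z + de) + al * cnj ga * complex_of_real (t^2)"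
  have act: "act_H3 g (z,t) = (w / complex_of_real N, t / N)"
    unfolding act_H3_def Let_def N_def w_def al_def be_def ga_def de_def by simp
  have Npos: "N > 0"
  proof (cases "ga = 0")
    case True
    then have "de \<noteq> 0" using dt by auto
    then show ?thesis using True unfolding N_def by simp
  next
    case False
    have "(cmod ga)^2 * t^2 > 0" using False assms(2) by simp
    then show ?thesis unfolding N_def by (simp add: add_nonneg_pos)
  qed
  define Nc where "Nc = complex_of_real N"
  have Nc: "Nc = (ga*z+de)*cnj(ga*z+de) + ga*cnj ga*tc*tc"
    unfolding Nc_def N_def tc_def by (simp add: cmod_sq_c2; simp add: power2_eq_square)
  have Nc0: "Nc \<noteq> 0" using Npos unfolding Nc_def by simp
  have tc0: "tc \<noteq> 0" using assms(2) unfolding tc_def by simp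
  have ctc: "cnj tc = tc" unfolding tc_def by simp
  have cNc: "cnj Nc = Nc" unfolding Nc_def by simp
  have wd: "w = (al * z + be) * cnj (ga * z + de) + al * cnj ga * tc * tc"
    unfolding w_def tc_def by (simp add: power2_eq_square)
  have E1: "Pm (act_H3 g (z,t)) = mk2 ((w*cnj w + tc*tc)/(Nc*tc)) (w/tc) (cnj w/tc) (Nc/tc)"
    unfolding act Pm_def using Nc0 tc0
    by (simp add: mk2_eq_iff flip: Nc_def tc_def) (simp add: field_simps cNc)
  define A where "A = z*cnj z + tc*tc"
  define X11 where "X11 = (al*A + be*cnj z)*cnj al + (al*z+be)*cnj be"
  define X12 where "X12 = (al*A + be*cnj z)*cnj ga + (al*z+be)*cnj de"
  define X21 where "X21 = (ga*A + de*cnj z)*cnj al + (ga*z+de)*cnj be"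
  define X22 where "X22 = (ga*A + de*cnj z)*cnj ga + (ga*z+de)*cnj de"
  have E2: "g ** Pm (z,t) ** ctranspose g = mk2 (X11/tc) (X12/tc) (X21/tc) (X22/tc)"
    unfolding g Pm_def mk2_ct X11_def X12_def X21_def X22_def A_def
    using tc0 by (simp add: mk2_mult mk2_eq_iff flip: tc_def; simp add: field_simps)
  have k11: "w*cnj w + tc*tc = Nc*X11"
    unfolding wd Nc X11_def A_def
    by (simp add: algebra_simps ctc) (use dt dtc in algebra)
  have k12: "w = X12" unfolding wd X12_def A_def by (simp add: algebra_simps)
  have k21: "cnj w = X21" unfolding wd X21_def A_def tc_def by (simp add: algebra_simps)
  have k22: "Nc = X22" unfolding Nc X22_def A_def by (simp add: algebra_simps)
  have "Pm (act_H3 g (z,t)) = g ** Pm (z,t) ** ctranspose g"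
    unfolding E1 E2 k11 k12[symmetric] k21[symmetric] k22[symmetric] using Nc0 tc0 by (simp add: mk2_eq_iff)
  moreover have "snd (act_H3 g (z,t)) > 0" using act Npos assms(2) by simp
  ultimately show ?thesis by blast
qed

lemma hplane_trace: "(z,t) \<in> hplane M \<longleftrightarrow> t > 0 \<and> trace (M ** Pm (z,t)) = 0"
proof (cases "t > 0")
  case True
  define tc where "tc = complex_of_real t"
  have tc0: "tc \<noteq> 0" using True unfolding tc_def by simp
  have "trace (M ** Pm (z,t)) = (M$1$1 * complex_of_real ((cmod z)^2 + t^2) + cnj z * M$1$2 + M$2$1 * z + M$2$2) / tc"
    apply (subst mk2_eta[of M])
    using tc0 by (simp add: Pm_def mk2_mult mk2_trace cmod_sq_c2 flip: tc_def; simp add: field_simps power2_eq_square)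
  then show ?thesis using True tc0 by (simp add: hplane_def)
next
  case False
  then show ?thesis by (simp add: hplane_def)
qed

lemma act_hplane:
  assumes "det g = 1" "t > 0"
  shows "act_H3 g (z,t) \<in> hplane A \<longleftrightarrow> (z,t) \<in> hplane (ctranspose g ** A ** g)"
proof -
  obtain z' t' where p: "act_H3 g (z,t) = (z',t')" by (cases "act_H3 g (z,t)") auto
  have t': "t' > 0" and P: "Pm (z',t') = g ** Pm (z,t) ** ctranspose g"
    using act_Pm[OF assms, of z] p by auto
  have "trace (A ** (g ** Pm (z,t) ** ctranspose g)) = trace (ctranspose g ** (A ** (g ** Pm (z,t))))"
    by (simp add: matrix_mul_assoc trace_mul_sym[of _ "ctranspose g"])
  also have "\<dots> = trace ((ctranspose g ** A ** g) ** Pm (z,t))"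
    by (simp add: matrix_mul_assoc)
  finally show ?thesis unfolding p hplane_trace P using t' assms(2) by simp
qed

lemma act_surj:
  assumes "det g = 1" "t > 0"
  shows "\<exists>z' t'. t' > 0 \<and> act_H3 g (z',t') = (z,t)"
proof -
  define h where "h = mk2 (g$2$2) (- g$1$2) (- g$2$1) (g$1$1)"
  have dg: "g$1$1 * g$2$2 - g$1$2 * g$2$1 = 1" using assms(1) by (simp add: det_2)
  have dh: "det h = 1" using dg unfolding h_def mk2_det by (simp add: algebra_simps)
  have gh: "g ** h = mat 1"
    unfolding h_def mk2_one using dg by (subst mk2_eta[of g]) (simp add: mk2_mult mk2_eq_iff algebra_simps)
  have hg: "ctranspose h ** ctranspose g = mat 1"
    unfolding ct_mult[symmetric] gh mk2_one mk2_ct by simp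
  obtain z1 t1 where p1: "act_H3 h (z,t) = (z1,t1)" by (cases "act_H3 h (z,t)") auto
  have t1: "t1 > 0" and P1: "Pm (z1,t1) = h ** Pm (z,t) ** ctranspose h"
    using act_Pm[OF dh assms(2), of z] p1 by auto
  obtain z2 t2 where p2: "act_H3 g (z1,t1) = (z2,t2)" by (cases "act_H3 g (z1,t1)") auto
  have t2: "t2 > 0" and P2: "Pm (z2,t2) = g ** Pm (z1,t1) ** ctranspose g"
    using act_Pm[OF assms(1) t1, of z1] p2 by auto
  have "Pm (z2,t2) = (g ** h) ** Pm (z,t) ** (ctranspose h ** ctranspose g)"
    unfolding P2 P1 by (simp add: matrix_mul_assoc)
  also have "\<dots> = Pm (z,t)" unfolding gh hg by simp
  finally have "z2 = z \<and> t2 = t" using Pm_inj t2 assms(2) by blast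
  then show ?thesis using p2 t1 by blast
qed



lemma lip_pv: "t > 0 \<Longrightarrow> lip (pv z t) (pv z t) = 1"
  using cmod_power2[of z]
  by (simp add: pv_def field_simps power2_eq_square; simp add: algebra_simps)

lemma vec_to_pt:
  assumes "lip P P > 0" "fst P > 0"
  shows "\<exists>z t. t > 0 \<and> (\<forall>X. lip X (pv z t) = 0 \<longleftrightarrow> lip X P = 0)"
proof -
  obtain e0 e1 e2 e3 where Pd: "P = (e0,e1,e2,e3)" by (cases P) auto
  define L where "L = lip P P"
  have L: "L = e0*e0 - e1*e1 - e2*e2 - e3*e3" unfolding L_def Pd by simp
  have L0: "L > 0" using assms(1) L_def by simp
  have e0: "e0 > 0" using assms(2) Pd by simp
  have "e1*e1 < e0*e0" using L L0 by (smt (verit) zero_le_square)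
  then have "\<bar>e1\<bar> < e0" using e0 by (metis abs_mult_self_eq abs_of_pos mult_less_cancel_left_pos not_less abs_ge_zero mult_mono)
  then have p4: "e0 - e1 > 0" by linarith
  have pp: "e0 + e1 > 0" using \<open>\<bar>e1\<bar> < e0\<close> by linarith
  define s where "s = sqrt L"
  have s0: "s > 0" using L0 s_def by simp
  have ss: "s * s = L" using L0 s_def by simp
  define t where "t = s / (e0 - e1)"
  define z where "z = Complex (e2/(e0-e1)) (e3/(e0-e1))"
  have t0: "t > 0" using s0 p4 t_def by simp
  have cz: "(cmod z)^2 = (e2*e2+e3*e3)/((e0-e1)*(e0-e1))"
    unfolding z_def cmod_power2 by (simp add: power_divide add_divide_distrib power2_eq_square)
  have sum: "e2*e2+e3*e3+s * s = (e0+e1)*(e0-e1)" using ss L by (simp add: algebra_simps)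
  have "(cmod z)^2 + t^2 = (e2*e2+e3*e3+s * s)/((e0-e1)*(e0-e1))"
    unfolding cz t_def by (simp add: power_divide add_divide_distrib power2_eq_square)
  also have "\<dots> = (e0+e1)/(e0-e1)" unfolding sum using p4 by simp
  finally have czt: "(cmod z)^2 + t^2 = (e0+e1)/(e0-e1)" .
  then have "pv z t = vlin (1/s) P 0 P"
    unfolding pv_def Pd vlin_def czt using p4 s0
    by (simp add: t_def z_def field_simps; simp add: algebra_simps)
  then have "lip X (pv z t) = (1/s) * lip X P" for X by (simp add: lip_vlin_r)
  then have "\<forall>X. lip X (pv z t) = 0 \<longleftrightarrow> lip X P = 0" using s0 by simp
  then show ?thesis using t0 by blast
qed

lemma per_g:
  assumes dg: "det g = 1" and hA: "A = hm m1 m4 \<mu>" and neg: "m1*m4 - (cmod \<mu>)^2 < 0"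
  shows "(act_H3 g ` hplane A = hplane A \<or> act_H3 g ` hplane A \<inter> hplane A = {}) \<longleftrightarrow>
         cmod (trace (ctranspose g ** A ** g ** matrix_inv A)) \<ge> 2"
proof -
  define A2 where "A2 = ctranspose g ** A ** g"
  have "ctranspose A2 = A2" unfolding A2_def hA by (simp add: ct_mult ct_ct ct_hm matrix_mul_assoc)
  then obtain n1 n4 \<nu> where A2: "A2 = hm n1 n4 \<nu>" using herm_hm by blast
  have "det A2 = det A" unfolding A2_def det_mul det_ct dg by simp
  then have dd: "n1*n4 - (cmod \<nu>)^2 = m1*m4 - (cmod \<mu>)^2" unfolding A2 hA det_hm of_real_eq_iff .
  define X where "X = hv m1 m4 \<mu>"
  define Y where "Y = hv n1 n4 \<nu>"
  define K where "K = - lip X X"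
  have K0: "K > 0" unfolding K_def X_def lip_hv using neg by simp
  have lxx: "lip X X = -K" unfolding K_def by simp
  have lyy: "lip Y Y = -K" unfolding K_def X_def Y_def lip_hv dd by simp
  define \<beta> where "\<beta> = lip X Y"
  have "trace (ctranspose g ** A ** g ** matrix_inv A) = trace (A2 ** matrix_inv A)"
    unfolding A2_def ..
  also have "\<dots> = of_real (2 * \<beta> / (-K))"
    unfolding A2 hA trace_hm[OF neg[THEN less_imp_neq]] \<beta>_def X_def Y_def K_def hA by simp
  finally have "cmod (trace (ctranspose g ** A ** g ** matrix_inv A)) = \<bar>2 * \<beta> / (-K)\<bar>"
    by (simp only: norm_of_real)
  also have "\<dots> = 2 * \<bar>\<beta>\<bar> / K" using K0 by (simp add: abs_divide abs_mult)
  finally have tr: "cmod (trace (ctranspose g ** A ** g ** matrix_inv A)) = 2 * \<bar>\<beta>\<bar> / K" .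
  have cond: "cmod (trace (ctranspose g ** A ** g ** matrix_inv A)) \<ge> 2 \<longleftrightarrow> \<beta>^2 \<ge> K^2"
  proof -
    have "2 \<le> 2 * \<bar>\<beta>\<bar> / K \<longleftrightarrow> K \<le> \<bar>\<beta>\<bar>" using K0 by (simp add: field_simps)
    also have "\<dots> \<longleftrightarrow> \<bar>K\<bar> \<le> \<bar>\<beta>\<bar>" using K0 by simp
    also have "\<dots> \<longleftrightarrow> K^2 \<le> \<beta>^2" by (rule abs_le_square_iff)
    finally show ?thesis unfolding tr .
  qed
  have HA: "(z,t) \<in> hplane A \<longleftrightarrow> t > 0 \<and> lip X (pv z t) = 0" for z t
    unfolding hA X_def hplane_hm ..
  have HA2: "(z,t) \<in> hplane A2 \<longleftrightarrow> t > 0 \<and> lip Y (pv z t) = 0" for z t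
    unfolding A2 Y_def hplane_hm ..
  have F1: "act_H3 g (z,t) \<in> hplane A \<longleftrightarrow> (z,t) \<in> hplane A2" if "t > 0" for z t
    unfolding A2_def using act_hplane[OF dg that] .
  show ?thesis unfolding cond
  proof
    assume L: "act_H3 g ` hplane A = hplane A \<or> act_H3 g ` hplane A \<inter> hplane A = {}"
    show "K^2 \<le> \<beta>^2"
    proof (rule ccontr)
      assume "\<not> K^2 \<le> \<beta>^2"
      then have lt: "(lip X Y)^2 < K^2" unfolding \<beta>_def by simp
      obtain P where P: "lip P P > 0" "fst P > 0" "lip X P = 0" "lip Y P = 0"
        using g1[OF lxx lyy K0 lt] by blast
      obtain z t where zt: "t > 0" "\<forall>W. lip W (pv z t) = 0 \<longleftrightarrow> lip W P = 0"
        using vec_to_pt[OF P(1,2)] by blast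
      have "lip X (pv z t) = 0" "lip Y (pv z t) = 0" using zt(2) P(3,4) by blast+
      then have "(z,t) \<in> hplane A" "(z,t) \<in> hplane A2" using zt(1) HA HA2 by auto
      then have "act_H3 g (z,t) \<in> act_H3 g ` hplane A \<inter> hplane A" using F1[OF zt(1)] by auto
      then have c1: "act_H3 g ` hplane A = hplane A" using L by auto
      obtain P' where P': "lip P' P' > 0" "fst P' > 0" "lip X P' = 0" "lip Y P' \<noteq> 0"
        using g1b[OF lxx lyy K0 lt] by blast
      obtain z' t' where zt': "t' > 0" "\<forall>W. lip W (pv z' t') = 0 \<longleftrightarrow> lip W P' = 0"
        using vec_to_pt[OF P'(1,2)] by blast
      have "lip X (pv z' t') = 0" "lip Y (pv z' t') \<noteq> 0" using zt'(2) P'(3,4) by blast+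
      then have "(z',t') \<in> hplane A" "(z',t') \<notin> hplane A2" using zt'(1) HA HA2 by auto
      then have "act_H3 g (z',t') \<in> act_H3 g ` hplane A" "act_H3 g (z',t') \<notin> hplane A"
        using F1[OF zt'(1)] by auto
      then show False using c1 by auto
    qed
  next
    assume ge: "K^2 \<le> \<beta>^2"
    show "act_H3 g ` hplane A = hplane A \<or> act_H3 g ` hplane A \<inter> hplane A = {}"
    proof (cases "act_H3 g ` hplane A \<inter> hplane A = {}")
      case True then show ?thesis by simp
    next
      case False
      then obtain z t where zt: "(z,t) \<in> hplane A" "act_H3 g (z,t) \<in> hplane A" by auto
      have t0: "t > 0" using zt HA by auto
      have "(z,t) \<in> hplane A2" using F1[OF t0] zt by simp
      then have o: "lip X (pv z t) = 0" "lip Y (pv z t) = 0" using zt HA HA2 by auto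
      have "lip (pv z t) (pv z t) > 0" using lip_pv[OF t0] by simp
      then have "Y = X \<or> Y = vlin (-1) X 0 X"
        using g2[OF lxx lyy K0 _ _ o] ge unfolding \<beta>_def by blast
      then have YX: "lip Y W = 0 \<longleftrightarrow> lip X W = 0" for W by (auto simp: lip_vlin_l)
      have H2: "hplane A2 = hplane A"
      proof (rule set_eqI)
        fix p :: "complex \<times> real"
        obtain z t where p: "p = (z,t)" by (cases p) auto
        show "p \<in> hplane A2 \<longleftrightarrow> p \<in> hplane A" unfolding p HA HA2 YX ..
      qed
      have "act_H3 g ` hplane A = hplane A"
      proof
        show "act_H3 g ` hplane A \<subseteq> hplane A"
        proof
          fix q assume "q \<in> act_H3 g ` hplane A"
          then obtain z t where q: "q = act_H3 g (z,t)" "(z,t) \<in> hplane A" by auto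
          then have "t > 0" using HA by auto
          then show "q \<in> hplane A" using F1 q H2 by auto
        qed
        show "hplane A \<subseteq> act_H3 g ` hplane A"
        proof
          fix q assume qA: "q \<in> hplane A"
          obtain z t where q: "q = (z,t)" by (cases q) auto
          have "t > 0" using qA q HA by auto
          then obtain z' t' where zt': "t' > 0" "act_H3 g (z',t') = (z,t)"
            using act_surj[OF dg] by blast
          have "act_H3 g (z',t') \<in> hplane A" using zt'(2) qA q by simp
          then have "(z',t') \<in> hplane A2" using F1[OF zt'(1)] by blast
          then have "(z',t') \<in> hplane A" using H2 by simp
          then show "q \<in> act_H3 g ` hplane A" using zt'(2) q by force
        qed
      qed
      then show ?thesis by simp
    qed
  qed
qed


theorem corollary3p3:
  fixes d :: nat and G :: "(complex^2^2) set" and A :: "complex^2^2"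
    and a c :: int and B :: complex
  assumes "d > 0" and "squarefree d"
    and "finite_index_subgroup d G"
    and "B \<in> Od d"
    and "A$1$1 = of_int a" and "A$1$2 = B" and "A$2$1 = cnj B" and "A$2$2 = of_int c"
    and "(cmod B)^2 - real_of_int (a * c) > 0"
  shows "embedded_surface G A \<longleftrightarrow>
         (\<forall>g\<in>G. cmod (trace (ctranspose g ** A ** g ** matrix_inv A)) \<ge> 2)"
proof -
  have hA: "A = hm (real_of_int a) (real_of_int c) B"
    using assms(5-8) by (subst mk2_eta) (simp add: hm_def)
  have neg: "real_of_int a * real_of_int c - (cmod B)^2 < 0" using assms(9) by simp
  have dg: "det g = 1" if "g \<in> G" for g
    using assms(3) that unfolding finite_index_subgroup_def SL2_Od_def by blast
  show ?thesis
    unfolding embedded_surface_def using per_g[OF dg hA neg] by blast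
qed

end
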